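(* Let $\varphi$ be a normal form $\mathrm{GF}^2{+}\mathrm{EG}$ sentence whose equivalence symbols are $E_1,\dots,E_k$, let $\bar\Theta=(\Theta^{E_1},\dots,\Theta^{E_k})$ be a tuple of sets of $M_\varphi$-counting types, let $\theta\in\Theta^{E_i}$ for some $i$, and let $\Gamma_{\bar\Theta}(\theta)$ be the system of linear (in)equalities defined in the context. The following are equivalent: (i) $\Gamma_{\bar\Theta}(\theta)$ has a non-negative integer solution; (ii) $\Gamma_{\bar\Theta}(\theta)$ has a non-negative rational solution; (iii) $\Gamma_{\bar\Theta}(\theta)$ has a non-negative integer solution in which at most $m$ unknowns are non-zero and all values are bounded by $m(m\cdot M_\varphi)^{2m+1}$, where $m$ is the number of (in)equalities in $\Gamma_{\bar\Theta}(\theta)$.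
   Context: $\mathrm{GF}^2{+}\mathrm{EG}$ is the two-variable guarded fragment in which the distinguished binary symbols $E_1,\dots,E_k$ occur only in guards and are interpreted as equivalences; $\varphi$ is in normal form (a conjunction of conjuncts of quantifier depth at most two of the usual Scott-type shapes). $\mathcal{A}_\varphi$ is the set of atomic 1-types over the signature of $\varphi$ (maximal consistent sets of atoms and negated atoms in the variable $x$), $|\varphi|$ is the length of $\varphi$, and $M_\varphi=3|\mathcal{A}_\varphi||\varphi|^3$. An $M_\varphi$-counting type is a function $\theta:\mathcal{A}_\varphi\to\{0,1,\dots,M_\varphi\}$; a 1-type $\alpha$ appears in it if $\theta(\alpha)>0$. $\alpha$ appears in $\Theta^{E_i}$ if it appears in some element of $\Theta^{E_i}$; $\mathcal{A}_{\bar\Theta}$ is the set of 1-types appearing in some $\Theta^{E_i}$. $\alpha$ is royal for $E_i$-classes if $\alpha$ appears in $\Theta^{E_i}$ and $\theta'(\alpha)<M_\varphi$ for every $\theta'\in\Theta^{E_i}$. The system $\Gamma_{\bar\Theta}(\theta)$ has unknowns $X^{E_j}_{\theta'}$ for $1\le j\le k$, $\theta'\in\Theta^{E_j}$, and $Y^{E_j}_\alpha$ for $1\le j\le k$, $\alpha\in\mathcal{A}_{\bar\Theta}$. For every $\alpha\in\mathcal{A}_{\bar\Theta}$ and every $j$ it contains: (E0) $Y^{E_j}_\alpha=\sum_{\theta'\in\Theta^{E_j}}\theta'(\alpha)X^{E_j}_{\theta'}$; (E1a) if $\alpha$ is royal for $E_j$-classes, $Y^{E_j}_\alpha\ge1$;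 (E1b) if $\alpha$ is not royal for $E_j$-classes, $\sum_{\theta'\in\Theta^{E_j},\,\theta'(\alpha)=M_\varphi}X^{E_j}_{\theta'}\ge1$; (E2) if $\alpha$ is royal for $E_j$-classes, $Y^{E_j}_\alpha\ge Y^{E_l}_\alpha$ for every $l\ne j$. Additionally it contains (E3) $X^{E_i}_\theta\ge1$ for the distinguished $\theta\in\Theta^{E_i}$. *)

theory Defs
  imports Main "HOL.Rat"
begin

text \<open>Atomic 1-types are elements of an abstract type 'a; the set of atomic 1-types
  of phi is a finite set A.  An M-counting type is a function theta from A to
  {0..M}; we represent it as a function 'a => nat that is 0 outside A.
  The tuple (Theta^{E_1},...,Theta^{E_k}) is a function Theta :: nat => ('a => nat) set,
  used on the indices 1..k.\<close>

definition counting_type :: "'a set \<Rightarrow> nat \<Rightarrow> ('a \<Rightarrow> nat) \<Rightarrow> bool" where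
  "counting_type A M t \<longleftrightarrow> (\<forall>a\<in>A. t a \<le> M) \<and> (\<forall>a. a \<notin> A \<longrightarrow> t a = 0)"

definition appears_in :: "('a \<Rightarrow> nat) set \<Rightarrow> 'a \<Rightarrow> bool" where
  "appears_in S a \<longleftrightarrow> (\<exists>t\<in>S. t a > 0)"

definition types_of_tuple :: "'a set \<Rightarrow> nat \<Rightarrow> (nat \<Rightarrow> ('a \<Rightarrow> nat) set) \<Rightarrow> 'a set" where
  "types_of_tuple A k Theta = {a \<in> A. \<exists>j\<in>{1..k}. appears_in (Theta j) a}"

definition royal :: "nat \<Rightarrow> ('a \<Rightarrow> nat) set \<Rightarrow> 'a \<Rightarrow> bool" where
  "royal M S a \<longleftrightarrow> appears_in S a \<and> (\<forall>t\<in>S. t a < M)"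

datatype 'a unknown = XU nat "'a \<Rightarrow> nat" | YU nat 'a

text \<open>(In)equalities of the system, indexed: E0 j alpha, E1 j alpha (E1a or E1b),
  E2 j l alpha, E3.\<close>
datatype 'a constr = C0 nat 'a | C1 nat 'a | C2 nat nat 'a | C3

definition unknowns :: "'a set \<Rightarrow> nat \<Rightarrow> (nat \<Rightarrow> ('a \<Rightarrow> nat) set) \<Rightarrow> 'a unknown set" where
  "unknowns A k Theta =
     {XU j t | j t. j \<in> {1..k} \<and> t \<in> Theta j} \<union>
     {YU j a | j a. j \<in> {1..k} \<and> a \<in> types_of_tuple A k Theta}"

definition constrs :: "'a set \<Rightarrow> nat \<Rightarrow> nat \<Rightarrow> (nat \<Rightarrow> ('a \<Rightarrow> nat) set) \<Rightarrow> 'a constr set" where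
  "constrs A M k Theta =
     {C0 j a | j a. j \<in> {1..k} \<and> a \<in> types_of_tuple A k Theta} \<union>
     {C1 j a | j a. j \<in> {1..k} \<and> a \<in> types_of_tuple A k Theta} \<union>
     {C2 j l a | j l a. j \<in> {1..k} \<and> l \<in> {1..k} \<and> l \<noteq> j \<and>
                  a \<in> types_of_tuple A k Theta \<and> royal M (Theta j) a} \<union>
     {C3}"

fun sat_constr :: "nat \<Rightarrow> (nat \<Rightarrow> ('a \<Rightarrow> nat) set) \<Rightarrow> nat \<Rightarrow> ('a \<Rightarrow> nat)
                    \<Rightarrow> ('a unknown \<Rightarrow> 'v::linordered_idom) \<Rightarrow> 'a constr \<Rightarrow> bool" where
  "sat_constr M Theta i th v (C0 j a) =
     (v (YU j a) = (\<Sum>t\<in>Theta j. of_nat (t a) * v (XU j t)))"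
| "sat_constr M Theta i th v (C1 j a) =
     (if royal M (Theta j) a then v (YU j a) \<ge> 1
      else (\<Sum>t\<in>{t \<in> Theta j. t a = M}. v (XU j t)) \<ge> 1)"
| "sat_constr M Theta i th v (C2 j l a) = (v (YU j a) \<ge> v (YU l a))"
| "sat_constr M Theta i th v C3 = (v (XU i th) \<ge> 1)"

definition nonneg_solution ::
  "'a set \<Rightarrow> nat \<Rightarrow> nat \<Rightarrow> (nat \<Rightarrow> ('a \<Rightarrow> nat) set) \<Rightarrow> nat \<Rightarrow> ('a \<Rightarrow> nat)
   \<Rightarrow> ('a unknown \<Rightarrow> 'v::linordered_idom) \<Rightarrow> bool" where
  "nonneg_solution A M k Theta i th v \<longleftrightarrow>
     (\<forall>u\<in>unknowns A k Theta. v u \<ge> 0) \<and>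
     (\<forall>c\<in>constrs A M k Theta. sat_constr M Theta i th v c)"

end

theory Submission
  imports Defs "Jordan_Normal_Form.Determinant"
begin


definition Lf :: "'u set \<Rightarrow> ('c \<Rightarrow> 'u \<Rightarrow> int) \<Rightarrow> 'c \<Rightarrow> ('u \<Rightarrow> 'v::linordered_idom) \<Rightarrow> 'v" where
  "Lf U a c v = (\<Sum>u\<in>U. of_int (a c u) * v u)"

definition solv :: "'u set \<Rightarrow> 'c set \<Rightarrow> ('c \<Rightarrow> 'u \<Rightarrow> int) \<Rightarrow> ('c \<Rightarrow> bool) \<Rightarrow> ('c \<Rightarrow> int)
   \<Rightarrow> ('u \<Rightarrow> 'v::linordered_idom) \<Rightarrow> bool" where
  "solv U C a e b v \<longleftrightarrow> (\<forall>u\<in>U. 0 \<le> v u) \<and>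
     (\<forall>c\<in>C. if e c then Lf U a c v = 0 else of_int (b c) \<le> Lf U a c v)"

definition tight :: "'u set \<Rightarrow> 'c set \<Rightarrow> ('c \<Rightarrow> 'u \<Rightarrow> int) \<Rightarrow> ('c \<Rightarrow> int)
   \<Rightarrow> ('u \<Rightarrow> 'v::linordered_idom) \<Rightarrow> 'c set" where
  "tight U C a b v = {c\<in>C. Lf U a c v = of_int (b c)}"

definition rigid :: "'u set \<Rightarrow> 'c set \<Rightarrow> ('c \<Rightarrow> 'u \<Rightarrow> int) \<Rightarrow> ('c \<Rightarrow> int)
   \<Rightarrow> ('u \<Rightarrow> rat) \<Rightarrow> bool" where
  "rigid U C a b v \<longleftrightarrow> (\<forall>d::'u\<Rightarrow>rat. (\<forall>u. u \<notin> {u\<in>U. v u \<noteq> 0} \<longrightarrow> d u = 0) \<and>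
      (\<forall>c\<in>tight U C a b v. Lf U a c d = 0) \<longrightarrow> (\<forall>u. d u = 0))"

lemma Lf_lin: "Lf U a c (\<lambda>u. v u + t * d u) = Lf U a c v + t * Lf U a c d"
  unfolding Lf_def by (simp add: algebra_simps sum.distrib sum_distrib_left)

lemma Lf_neg: "Lf U a c (\<lambda>u. - d u) = - Lf U a c d"
  unfolding Lf_def by (simp add: sum_negf)

lemma reduce_step:
  fixes v :: "'u \<Rightarrow> rat"
  assumes fU: "finite U" and fC: "finite C" and eb: "\<forall>c\<in>C. e c \<longrightarrow> b c = 0"
    and sv: "solv U C a e b v" and nr: "\<not> rigid U C a b v"
  shows "\<exists>v'::'u\<Rightarrow>rat. solv U C a e b v' \<and>
     ((card {u\<in>U. v' u \<noteq> 0} < card {u\<in>U. v u \<noteq> 0}) \<or>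
      (card {u\<in>U. v' u \<noteq> 0} \<le> card {u\<in>U. v u \<noteq> 0} \<and>
       card (tight U C a b v) < card (tight U C a b v')))"
proof -
  define S where "S = {u\<in>U. v u \<noteq> 0}"
  define T where "T = tight U C a b v"
  have TC: "T \<subseteq> C" unfolding T_def tight_def by auto
  obtain d0 :: "'u \<Rightarrow> rat" where d0S: "\<forall>u. u \<notin> S \<longrightarrow> d0 u = 0" and d0T: "\<forall>c\<in>T. Lf U a c d0 = 0"
    and d0nz: "\<exists>u. d0 u \<noteq> 0"
    using nr unfolding rigid_def S_def T_def by blast
  obtain d :: "'u \<Rightarrow> rat" where dS: "\<forall>u. u \<notin> S \<longrightarrow> d u = 0" and dT: "\<forall>c\<in>T. Lf U a c d = 0"
    and dneg: "\<exists>u\<in>S. d u < 0"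
  proof (cases "\<exists>u\<in>S. d0 u < 0")
    case True then show ?thesis using that d0S d0T by blast
  next
    case False
    from d0nz obtain u where "d0 u \<noteq> 0" by blast
    have uS: "u \<in> S" using d0S \<open>d0 u \<noteq> 0\<close> by blast
    then have "\<not> d0 u < 0" using False by blast
    then have "- d0 u < 0" using \<open>d0 u \<noteq> 0\<close> by linarith
    note uS this
    then show ?thesis using that[of "\<lambda>u. - d0 u"] d0S d0T Lf_neg[of U a _ d0] by auto
  qed
  have vpos: "\<forall>u\<in>S. 0 < v u" using sv unfolding S_def solv_def by force
  have v0: "\<forall>u\<in>U. u \<notin> S \<longrightarrow> v u = 0" unfolding S_def by auto
  have fS: "finite S" using fU unfolding S_def by auto
  define Q1 where "Q1 = (\<lambda>u. v u / (- d u)) ` {u\<in>S. d u < 0}"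
  define Q2 where "Q2 = (\<lambda>c. (Lf U a c v - of_int (b c)) / (- Lf U a c d)) ` {c\<in>C. c \<notin> T \<and> Lf U a c d < 0}"
  define t where "t = Min (Q1 \<union> Q2)"
  have fQ: "finite (Q1 \<union> Q2)" unfolding Q1_def Q2_def using fS fC by auto
  have neQ: "Q1 \<union> Q2 \<noteq> {}" unfolding Q1_def using dneg by auto
  have nontight: "\<And>c. c \<in> C \<Longrightarrow> c \<notin> T \<Longrightarrow> of_int (b c) < Lf U a c v \<and> \<not> e c"
  proof -
    fix c assume c: "c \<in> C" "c \<notin> T"
    then have ne: "Lf U a c v \<noteq> of_int (b c)" unfolding T_def tight_def by auto
    show "of_int (b c) < Lf U a c v \<and> \<not> e c"
    proof (cases "e c")
      case True then show ?thesis using sv c eb ne unfolding solv_def by auto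
    next
      case False then show ?thesis using sv c ne unfolding solv_def by force
    qed
  qed
  have Qpos: "\<forall>q\<in>Q1 \<union> Q2. 0 < q"
  proof
    fix q assume "q \<in> Q1 \<union> Q2"
    then show "0 < q"
    proof
      assume "q \<in> Q1" then obtain u where u: "u \<in> S" "d u < 0" and q: "q = v u / (- d u)"
        unfolding Q1_def by auto
      have np: "0 < - d u" using u by simp
      show ?thesis using q divide_pos_pos[OF _ np] vpos u(1) by metis
    next
      assume "q \<in> Q2" then obtain c where "c \<in> C" "c \<notin> T" "Lf U a c d < 0"
        and q: "q = (Lf U a c v - of_int (b c)) / (- Lf U a c d)" unfolding Q2_def by auto
      have np: "0 < - Lf U a c d" using \<open>Lf U a c d < 0\<close> by simp
      have pp: "0 < Lf U a c v - of_int (b c)" using nontight[OF \<open>c \<in> C\<close> \<open>c \<notin> T\<close>] by simp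
      show ?thesis using q divide_pos_pos[OF pp np] by metis
    qed
  qed
  have tpos: "0 < t" unfolding t_def using Qpos fQ neQ by auto
  have tle: "\<forall>q\<in>Q1 \<union> Q2. t \<le> q" unfolding t_def using fQ by auto
  define v' where "v' = (\<lambda>u. v u + t * d u)"
  have Lv': "\<And>c. Lf U a c v' = Lf U a c v + t * Lf U a c d" unfolding v'_def by (rule Lf_lin)
  have v'nn: "\<forall>u\<in>U. 0 \<le> v' u"
  proof
    fix u assume u: "u \<in> U"
    show "0 \<le> v' u"
    proof (cases "d u < 0")
      case True
      then have "u \<in> S" using dS by force
      then have "t \<le> v u / (- d u)" using tle True unfolding Q1_def by auto
      moreover have np: "0 < - d u" using True by simp
      ultimately have "t * (- d u) \<le> v u" by (simp only: pos_le_divide_eq[OF np])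
      then show ?thesis unfolding v'_def by (simp add: algebra_simps)
    next
      case False
      then show ?thesis using sv u tpos unfolding v'_def solv_def by auto
    qed
  qed
  have Tsub: "T \<subseteq> tight U C a b v'"
    using TC dT Lv' unfolding T_def tight_def by auto
  have sv': "solv U C a e b v'"
    unfolding solv_def
  proof (intro conjI v'nn ballI)
    fix c assume c: "c \<in> C"
    show "if e c then Lf U a c v' = 0 else of_int (b c) \<le> Lf U a c v'"
    proof (cases "c \<in> T")
      case True
      then show ?thesis using Lv' dT sv c unfolding solv_def by auto
    next
      case False
      note nt = nontight[OF c False]
      show ?thesis
      proof (cases "Lf U a c d < 0")
        case True
        then have "t \<le> (Lf U a c v - of_int (b c)) / (- Lf U a c d)"
          using tle c False unfolding Q2_def by auto
        moreover have np: "0 < - Lf U a c d" using True by simp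
        ultimately have "t * (- Lf U a c d) \<le> Lf U a c v - of_int (b c)"
          by (simp only: pos_le_divide_eq[OF np])
        then show ?thesis using nt Lv' by (simp add: algebra_simps)
      next
        case False
        then show ?thesis using nt Lv' tpos
          by (simp add: add_increasing2 less_imp_le order_trans)
      qed
    qed
  qed
  have supp': "{u\<in>U. v' u \<noteq> 0} \<subseteq> S"
  proof
    fix x assume x: "x \<in> {u\<in>U. v' u \<noteq> 0}"
    show "x \<in> S"
    proof (rule ccontr)
      assume "x \<notin> S"
      then have "v x = 0" "d x = 0" using dS v0 x by auto
      then show False using x unfolding v'_def by simp
    qed
  qed
  have tin: "t \<in> Q1 \<union> Q2" unfolding t_def using fQ neQ by (rule Min_in)
  from tin show ?thesis
  proof
    assume "t \<in> Q1"
    then obtain u where u: "u \<in> S" "d u < 0" "t = v u / (- d u)" unfolding Q1_def by auto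
    then have "v' u = 0" unfolding v'_def by (simp add: field_simps)
    then have "{u\<in>U. v' u \<noteq> 0} \<subset> S" using supp' u by auto
    then have "card {u\<in>U. v' u \<noteq> 0} < card S" using fS by (simp add: psubset_card_mono)
    then show ?thesis using sv' unfolding S_def by blast
  next
    assume "t \<in> Q2"
    then obtain c where c: "c \<in> C" "c \<notin> T" "Lf U a c d < 0"
      and q: "t = (Lf U a c v - of_int (b c)) / (- Lf U a c d)" unfolding Q2_def by auto
    then have "Lf U a c v' = of_int (b c)" using Lv' by (simp add: field_simps)
    then have "c \<in> tight U C a b v'" using c unfolding tight_def by auto
    then have "T \<subset> tight U C a b v'" using Tsub c by auto
    moreover have "finite (tight U C a b v')" using fC unfolding tight_def by auto
    ultimately have "card T < card (tight U C a b v')" by (simp add: psubset_card_mono)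
    moreover have "card {u\<in>U. v' u \<noteq> 0} \<le> card S" using fS supp' by (rule card_mono)
    ultimately show ?thesis using sv' unfolding S_def T_def by blast
  qed
qed

lemma reduce:
  fixes v :: "'u \<Rightarrow> rat"
  assumes fU: "finite U" and fC: "finite C" and eb: "\<forall>c\<in>C. e c \<longrightarrow> b c = 0"
    and sv: "solv U C a e b v"
  shows "\<exists>v'. solv U C a e b v' \<and> rigid U C a b v'"
proof -
  define f where "f = (\<lambda>v::'u\<Rightarrow>rat. card {u\<in>U. v u \<noteq> 0} * (card C + 1) + (card C - card (tight U C a b v)))"
  have tC: "\<And>v::'u\<Rightarrow>rat. card (tight U C a b v) \<le> card C"
    using fC unfolding tight_def by (intro card_mono) auto
  show ?thesis using sv
  proof (induction "f v" arbitrary: v rule: less_induct)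
    case less
    show ?case
    proof (cases "rigid U C a b v")
      case True then show ?thesis using less.prems by blast
    next
      case False
      from reduce_step[OF fU fC eb less.prems False] obtain v' :: "'u \<Rightarrow> rat" where
        sv': "solv U C a e b v'" and
        dec: "card {u\<in>U. v' u \<noteq> 0} < card {u\<in>U. v u \<noteq> 0} \<or>
      card {u\<in>U. v' u \<noteq> 0} \<le> card {u\<in>U. v u \<noteq> 0} \<and>
       card (tight U C a b v) < card (tight U C a b v')" by blast
      have "f v' < f v"
      proof -
        have A: "card (tight U C a b v') \<le> card C" "card (tight U C a b v) \<le> card C" using tC by auto
        from dec show ?thesis
        proof
          assume h: "card {u\<in>U. v' u \<noteq> 0} < card {u\<in>U. v u \<noteq> 0}"
          then have "card {u\<in>U. v' u \<noteq> 0} * (card C + 1) + (card C + 1) \<le> card {u\<in>U. v u \<noteq> 0} * (card C + 1)"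
            by (metis Suc_eq_plus1 Suc_leI mult_Suc mult_le_mono1 add.commute)
          then show ?thesis unfolding f_def using A by linarith
        next
          assume h: "card {u\<in>U. v' u \<noteq> 0} \<le> card {u\<in>U. v u \<noteq> 0} \<and>
             card (tight U C a b v) < card (tight U C a b v')"
          then have "card {u\<in>U. v' u \<noteq> 0} * (card C + 1) \<le> card {u\<in>U. v u \<noteq> 0} * (card C + 1)"
            using h mult_le_mono1 by blast
          then show ?thesis unfolding f_def using A h by linarith
        qed
      qed
      then show ?thesis using less.hyps sv' by blast
    qed
  qed
qed



lemma det_bound_int:
  fixes Am :: "int mat"
  assumes Am: "Am \<in> carrier_mat n n" and bd: "\<forall>i<n. \<forall>j<n. \<bar>Am $$ (i,j)\<bar> \<le> K"
  shows "\<bar>det Am\<bar> \<le> int (fact n) * K ^ n"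
proof -
  have dr: "dim_row Am = n" "dim_col Am = n" using Am by auto
  have "\<bar>det Am\<bar> = \<bar>\<Sum>p\<in>{p. p permutes {0..<n}}. signof p * (\<Prod>i = 0..<n. Am $$ (i, p i))\<bar>"
    unfolding det_def dr by simp
  also have "\<dots> \<le> (\<Sum>p\<in>{p. p permutes {0..<n}}. \<bar>signof p * (\<Prod>i = 0..<n. Am $$ (i, p i))\<bar>)"
    by (rule sum_abs)
  also have "\<dots> \<le> (\<Sum>p\<in>{p. p permutes {0..<n}}. K ^ n)"
  proof (rule sum_mono)
    fix p assume p: "p \<in> {p. p permutes {0..<n}}"
    have s: "\<bar>signof p :: int\<bar> = 1" by (simp add: sign_def)
    have "\<bar>\<Prod>i = 0..<n. Am $$ (i, p i)\<bar> = (\<Prod>i = 0..<n. \<bar>Am $$ (i, p i)\<bar>)"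
      by (simp add: abs_prod)
    also have "\<dots> \<le> (\<Prod>i = 0..<n. K)"
    proof (rule prod_mono)
      fix i assume i: "i \<in> {0..<n}"
      then have "p i \<in> {0..<n}" using p by (simp add: permutes_in_image)
      then show "0 \<le> \<bar>Am $$ (i, p i)\<bar> \<and> \<bar>Am $$ (i, p i)\<bar> \<le> K" using bd i by auto
    qed
    finally show "\<bar>signof p * (\<Prod>i = 0..<n. Am $$ (i, p i))\<bar> \<le> K ^ n"
      by (simp add: abs_mult s)
  qed
  also have "\<dots> = int (fact n) * K ^ n"
    using card_permutations[of "{0..<n}" n] by simp
  finally show ?thesis .
qed

lemma sum_list_reindex:
  assumes "distinct ss" "set ss = S"
  shows "(\<Sum>u\<in>S. f u) = (\<Sum>j<length ss. f (ss ! j))"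
proof -
  have "bij_betw ((!) ss) {..<length ss} S" using assms by (intro bij_betw_nth) auto
  then show ?thesis by (simp add: sum.reindex_bij_betw)
qed

lemma Lf_supp:
  assumes fU: "finite U" and SU: "S \<subseteq> U" and z: "\<forall>u\<in>U. u \<notin> S \<longrightarrow> v u = 0"
    and ss: "distinct ss" "set ss = S"
  shows "Lf U a c v = (\<Sum>j<length ss. of_int (a c (ss ! j)) * v (ss ! j))"
proof -
  have "Lf U a c v = (\<Sum>u\<in>S. of_int (a c u) * v u)"
    unfolding Lf_def by (rule sum.mono_neutral_right[OF fU SU]) (use z in auto)
  also have "\<dots> = (\<Sum>j<length ss. of_int (a c (ss ! j)) * v (ss ! j))"
    by (rule sum_list_reindex[OF ss])
  finally show ?thesis .
qed

lemma Lf_of_int: "of_int (Lf U a c w) = Lf U a c (\<lambda>u. (of_int (w u) :: 'v::linordered_idom))"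
  unfolding Lf_def by simp

lemma Lf_cong: "(\<And>u. u \<in> U \<Longrightarrow> v u = v' u) \<Longrightarrow> Lf U a c v = Lf U a c v'"
  unfolding Lf_def by (rule sum.cong) auto

lemma Lf_scale: "Lf U a c (\<lambda>u. s * v u) = s * Lf U a c v"
  unfolding Lf_def by (simp add: sum_distrib_left algebra_simps)



lemma rigid_int:
  fixes v :: "'u \<Rightarrow> rat" and M :: nat
  assumes fU: "finite U" and fC: "finite C" and eb: "\<forall>c\<in>C. e c \<longrightarrow> b c = 0"
    and b01: "\<forall>c\<in>C. 0 \<le> b c \<and> b c \<le> 1"
    and aM: "\<forall>c\<in>C. \<forall>u\<in>U. \<bar>a c u\<bar> \<le> int M" and M1: "1 \<le> M"
    and sv: "solv U C a e b v" and rg: "rigid U C a b v"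
  shows "\<exists>w::'u\<Rightarrow>int. solv U C a e b w \<and> (\<exists>n \<le> card C. card {u\<in>U. w u \<noteq> 0} \<le> n \<and>
           (\<forall>u\<in>U. \<bar>w u\<bar> \<le> int (fact n * (card C * M^2)^n)))"
proof -
  define S where "S = {u\<in>U. v u \<noteq> 0}"
  define T where "T = tight U C a b v"
  have SU: "S \<subseteq> U" unfolding S_def by auto
  have TC: "T \<subseteq> C" unfolding T_def tight_def by auto
  have fS: "finite S" using fU SU finite_subset by blast
  have fT: "finite T" using fC TC finite_subset by blast
  obtain ss where ss: "distinct ss" "set ss = S" using finite_distinct_list[OF fS] by metis
  obtain cs where cs: "distinct cs" "set cs = T" using finite_distinct_list[OF fT] by metis
  define n where "n = length ss"
  define p where "p = length cs"
  have n_card: "n = card S" unfolding n_def using ss distinct_card by fastforce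
  have p_card: "p = card T" unfolding p_def using cs distinct_card by fastforce
  have pC: "p \<le> card C" unfolding p_card using fC TC card_mono by blast
  have ssU: "\<And>j. j < n \<Longrightarrow> ss ! j \<in> U" using ss SU unfolding n_def by auto
  have ssS: "\<And>j. j < n \<Longrightarrow> ss ! j \<in> S" using ss unfolding n_def by auto
  have csC: "\<And>i. i < p \<Longrightarrow> cs ! i \<in> C" using cs TC unfolding p_def by auto
  have csT: "\<And>i. i < p \<Longrightarrow> cs ! i \<in> T" using cs unfolding p_def by auto
  define A where "A = (\<lambda>i j. a (cs ! i) (ss ! j))"
  have Abd: "\<And>i j. i < p \<Longrightarrow> j < n \<Longrightarrow> \<bar>A i j\<bar> \<le> int M"
    unfolding A_def using aM csC ssU by auto
  define idx where "idx = inv_into {..<n} ((!) ss)"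
  have bij: "bij_betw ((!) ss) {..<n} S" unfolding n_def using ss by (intro bij_betw_nth) auto
  have idx1: "\<And>j. j < n \<Longrightarrow> idx (ss ! j) = j"
  proof -
    fix j assume j: "j < n"
    have "inj_on ((!) ss) {..<n}" using bij by (simp only: bij_betw_def)
    then show "idx (ss ! j) = j" unfolding idx_def using j by (intro inv_into_f_f) auto
  qed
  have idx2: "\<And>u. u \<in> S \<Longrightarrow> idx u < n \<and> ss ! (idx u) = u"
  proof -
    fix u assume u: "u \<in> S"
    have im: "(!) ss ` {..<n} = S" using bij by (simp only: bij_betw_def)
    have "idx u \<in> {..<n}" unfolding idx_def by (rule inv_into_into) (use u im in blast)
    moreover have "ss ! (idx u) = u" unfolding idx_def by (rule f_inv_into_f) (use u im in blast)
    ultimately show "idx u < n \<and> ss ! (idx u) = u" by simp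
  qed
  have v0: "\<forall>u\<in>U. u \<notin> S \<longrightarrow> v u = 0" unfolding S_def by auto
  have Lv: "\<And>c. Lf U a c v = (\<Sum>j<n. of_int (a c (ss ! j)) * v (ss ! j))"
    unfolding n_def by (rule Lf_supp[OF fU SU v0 ss])
  have K: "\<And>x::rat vec. x \<in> carrier_vec n \<Longrightarrow>
      (\<forall>i<p. (\<Sum>j<n. of_int (A i j) * x $ j) = 0) \<Longrightarrow> x = 0\<^sub>v n"
  proof -
    fix x :: "rat vec" assume x: "x \<in> carrier_vec n" and h: "\<forall>i<p. (\<Sum>j<n. of_int (A i j) * x $ j) = 0"
    define d where "d = (\<lambda>u. if u \<in> S then x $ idx u else 0)"
    have dS: "\<forall>u. u \<notin> {u\<in>U. v u \<noteq> 0} \<longrightarrow> d u = 0" unfolding d_def S_def by auto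
    have dT: "\<forall>c\<in>tight U C a b v. Lf U a c d = 0"
    proof
      fix c assume "c \<in> tight U C a b v"
      then obtain i where i: "i < p" "c = cs ! i" using cs unfolding T_def[symmetric] p_def
        by (metis in_set_conv_nth)
      have "Lf U a c d = (\<Sum>j<n. of_int (a c (ss ! j)) * d (ss ! j))"
        unfolding n_def by (rule Lf_supp[OF fU SU _ ss]) (auto simp: d_def)
      also have "\<dots> = (\<Sum>j<n. of_int (A i j) * x $ j)"
        by (rule sum.cong) (auto simp: d_def A_def i ssS idx1)
      also have "\<dots> = 0" using h i by auto
      finally show "Lf U a c d = 0" .
    qed
    have "\<forall>u. d u = 0" using rg dS dT unfolding rigid_def by blast
    then have "\<And>j. j < n \<Longrightarrow> x $ j = 0"
      by (metis d_def idx1 ssS)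
    then show "x = 0\<^sub>v n" using x by (intro eq_vecI) auto
  qed
  have np: "n \<le> p"
  proof (rule ccontr)
    assume "\<not> n \<le> p"
    then have pn: "p < n" by simp
    define Bm :: "rat mat" where "Bm = mat n n (\<lambda>(i,j). if i < p then of_int (A i j) else 0)"
    have Bc: "Bm \<in> carrier_mat n n" unfolding Bm_def by auto
    have "det Bm = (\<Sum>j<n. Bm $$ (n - 1, j) * cofactor Bm (n - 1) j)"
      using pn by (intro laplace_expansion_row[OF Bc]) auto
    also have "\<dots> = 0"
    proof (rule sum.neutral, rule ballI)
      fix j assume "j \<in> {..<n}"
      moreover have "\<not> (n - 1 < p)" using pn by simp
      ultimately show "Bm $$ (n - 1, j) * cofactor Bm (n - 1) j = 0" using pn unfolding Bm_def by simp
    qed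
    finally have "det Bm = 0" .
    then obtain x where x: "x \<in> carrier_vec n" "x \<noteq> 0\<^sub>v n" "Bm *\<^sub>v x = 0\<^sub>v n"
      using det_0_iff_vec_prod_zero_field[OF Bc] by blast
    have "\<forall>i<p. (\<Sum>j<n. of_int (A i j) * x $ j) = 0"
    proof (intro allI impI)
      fix i assume i: "i < p"
      have "(Bm *\<^sub>v x) $ i = 0" using x i pn by auto
      moreover have "(Bm *\<^sub>v x) $ i = (\<Sum>j<n. of_int (A i j) * x $ j)"
        using i pn x(1) unfolding Bm_def by (auto simp: scalar_prod_def lessThan_atLeast0 intro!: sum.cong)
      ultimately show "(\<Sum>j<n. of_int (A i j) * x $ j) = 0" by simp
    qed
    then show False using K x by blast
  qed
  define G :: "int mat" where "G = mat n n (\<lambda>(j,k). \<Sum>i<p. A i j * A i k)"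
  define h :: "int vec" where "h = vec n (\<lambda>j. \<Sum>i<p. A i j * b (cs ! i))"
  define Gq :: "rat mat" where "Gq = map_mat of_int G"
  define hq :: "rat vec" where "hq = map_vec of_int h"
  have Gc: "G \<in> carrier_mat n n" unfolding G_def by auto
  have Gqc: "Gq \<in> carrier_mat n n" unfolding Gq_def G_def by auto
  have hc: "h \<in> carrier_vec n" unfolding h_def by auto
  have Gq_ent: "\<And>j k. j < n \<Longrightarrow> k < n \<Longrightarrow> Gq $$ (j,k) = (\<Sum>i<p. of_int (A i j) * of_int (A i k))"
    unfolding Gq_def G_def by simp
  have detG: "det Gq \<noteq> 0"
  proof
    assume "det Gq = 0"
    then obtain x where x: "x \<in> carrier_vec n" "x \<noteq> 0\<^sub>v n" "Gq *\<^sub>v x = 0\<^sub>v n"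
      using det_0_iff_vec_prod_zero_field[OF Gqc] by blast
    define r where "r = (\<lambda>i. \<Sum>j<n. of_int (A i j) * x $ j :: rat)"
    have Gx: "\<And>j. j < n \<Longrightarrow> (Gq *\<^sub>v x) $ j = (\<Sum>k<n. (\<Sum>i<p. of_int (A i j) * of_int (A i k)) * x $ k)"
      using x(1) Gqc by (auto simp: scalar_prod_def Gq_ent lessThan_atLeast0 intro!: sum.cong)
    have "(\<Sum>j<n. x $ j * (Gq *\<^sub>v x) $ j) = 0" using x by auto
    moreover have "(\<Sum>j<n. x $ j * (Gq *\<^sub>v x) $ j) = (\<Sum>i<p. r i * r i)"
    proof -
      have "(\<Sum>j<n. x $ j * (Gq *\<^sub>v x) $ j) =
          (\<Sum>j<n. \<Sum>k<n. \<Sum>i<p. (of_int (A i j) * x $ j) * (of_int (A i k) * x $ k))"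
        by (rule sum.cong[OF refl]) (simp add: Gx sum_distrib_left sum_distrib_right algebra_simps)
      also have "\<dots> = (\<Sum>j<n. \<Sum>i<p. \<Sum>k<n. (of_int (A i j) * x $ j) * (of_int (A i k) * x $ k))"
        by (rule sum.cong[OF refl], rule sum.swap)
      also have "\<dots> = (\<Sum>i<p. \<Sum>j<n. \<Sum>k<n. (of_int (A i j) * x $ j) * (of_int (A i k) * x $ k))"
        by (rule sum.swap)
      also have "\<dots> = (\<Sum>i<p. r i * r i)"
        unfolding r_def by (simp add: sum_product)
      finally show ?thesis .
    qed
    ultimately have "(\<Sum>i<p. r i * r i) = 0" by simp
    then have "\<forall>i\<in>{..<p}. r i * r i = 0" by (subst (asm) sum_nonneg_eq_0_iff) auto
    then have "\<forall>i<p. r i = 0" by simp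
    then have "x = 0\<^sub>v n" using K x unfolding r_def by blast
    then show False using x by simp
  qed
  define x0 :: "rat vec" where "x0 = vec n (\<lambda>j. v (ss ! j))"
  have x0c: "x0 \<in> carrier_vec n" unfolding x0_def by auto
  have tightb: "\<And>i. i < p \<Longrightarrow> (\<Sum>k<n. of_int (A i k) * v (ss ! k)) = of_int (b (cs ! i))"
  proof -
    fix i assume i: "i < p"
    have "cs ! i \<in> tight U C a b v" using csT i unfolding T_def by auto
    then have "Lf U a (cs ! i) v = of_int (b (cs ! i))" unfolding tight_def by auto
    then show "(\<Sum>k<n. of_int (A i k) * v (ss ! k)) = of_int (b (cs ! i))"
      using Lv unfolding A_def by simp
  qed
  have Gx0: "Gq *\<^sub>v x0 = hq"
  proof (rule eq_vecI)
    show "dim_vec (Gq *\<^sub>v x0) = dim_vec hq" using Gqc unfolding hq_def h_def by simp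
    fix j assume "j < dim_vec hq"
    then have j: "j < n" unfolding hq_def h_def by simp
    have "(Gq *\<^sub>v x0) $ j = (\<Sum>k<n. (\<Sum>i<p. of_int (A i j) * of_int (A i k)) * v (ss ! k))"
      using j Gqc x0c by (auto simp: scalar_prod_def Gq_ent x0_def lessThan_atLeast0 intro!: sum.cong)
    also have "\<dots> = (\<Sum>k<n. \<Sum>i<p. of_int (A i j) * (of_int (A i k) * v (ss ! k)))"
      by (simp add: sum_distrib_right mult.assoc)
    also have "\<dots> = (\<Sum>i<p. \<Sum>k<n. of_int (A i j) * (of_int (A i k) * v (ss ! k)))"
      by (rule sum.swap)
    also have "\<dots> = (\<Sum>i<p. of_int (A i j) * (\<Sum>k<n. of_int (A i k) * v (ss ! k)))"
      by (simp add: sum_distrib_left)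
    also have "\<dots> = (\<Sum>i<p. of_int (A i j) * of_int (b (cs ! i)))"
      by (rule sum.cong) (auto simp: tightb)
    also have "\<dots> = hq $ j" using j unfolding hq_def h_def by simp
    finally show "(Gq *\<^sub>v x0) $ j = hq $ j" .
  qed
  define D where "D = det G"
  have DqG: "det Gq = of_int D" unfolding D_def Gq_def by simp
  have D0: "D \<noteq> 0" using detG DqG by auto
  define Dk where "Dk = (\<lambda>k. det (replace_col G h k))"
  have cram: "\<And>k. k < n \<Longrightarrow> of_int (Dk k) = v (ss ! k) * of_int D"
  proof -
    fix k assume k: "k < n"
    have rc: "replace_col Gq hq k = map_mat of_int (replace_col G h k)"
      using Gc hc unfolding Gq_def hq_def replace_col_def by (intro eq_matI) auto
    have "det (replace_col Gq (Gq *\<^sub>v x0) k) = x0 $ k * det Gq"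
      by (rule cramer_lemma_mat[OF Gqc x0c k])
    then show "of_int (Dk k) = v (ss ! k) * of_int D"
      unfolding Gx0 rc Dk_def DqG using k by (simp add: x0_def)
  qed
  define w where "w = (\<lambda>u. if u \<in> S then sgn D * Dk (idx u) else 0)"
  have wv: "\<And>u. u \<in> U \<Longrightarrow> (of_int (w u) :: rat) = of_int \<bar>D\<bar> * v u"
  proof -
    fix u assume u: "u \<in> U"
    show "(of_int (w u) :: rat) = of_int \<bar>D\<bar> * v u"
    proof (cases "u \<in> S")
      case True
      then have "of_int (Dk (idx u)) = v u * (of_int D :: rat)" using cram idx2 by metis
      then have "(of_int (w u) :: rat) = of_int (sgn D) * (v u * of_int D)"
        unfolding w_def using True by simp
      also have "\<dots> = of_int (sgn D * D) * v u" by (simp add: algebra_simps)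
      also have "\<dots> = of_int \<bar>D\<bar> * v u"
      proof -
        have "sgn D * D = \<bar>D\<bar>" by (cases "D < 0") (auto simp: sgn_if)
        then show ?thesis by simp
      qed
      finally show ?thesis .
    next
      case False then show ?thesis using v0 u unfolding w_def by simp
    qed
  qed
  have Lw: "\<And>c. (of_int (Lf U a c w) :: rat) = of_int \<bar>D\<bar> * Lf U a c v"
  proof -
    fix c
    have "(of_int (Lf U a c w) :: rat) = Lf U a c (\<lambda>u. of_int (w u))" by (rule Lf_of_int)
    also have "\<dots> = Lf U a c (\<lambda>u. of_int \<bar>D\<bar> * v u)" by (rule Lf_cong) (simp add: wv)
    also have "\<dots> = of_int \<bar>D\<bar> * Lf U a c v" by (rule Lf_scale)
    finally show "(of_int (Lf U a c w) :: rat) = of_int \<bar>D\<bar> * Lf U a c v" .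
  qed
  have D1: "(1::rat) \<le> of_int \<bar>D\<bar>" using D0 by simp
  have sw: "solv U C a e b w"
    unfolding solv_def
  proof (intro conjI ballI)
    fix u assume u: "u \<in> U"
    have "(0::rat) \<le> of_int \<bar>D\<bar> * v u" using sv u unfolding solv_def by simp
    then show "0 \<le> w u" using wv[OF u] by simp
  next
    fix c assume c: "c \<in> C"
    show "if e c then Lf U a c w = 0 else of_int (b c) \<le> Lf U a c w"
    proof (cases "e c")
      case True
      then have "Lf U a c v = 0" using sv c unfolding solv_def by auto
      then show ?thesis using Lw[of c] True by simp
    next
      case False
      then have bl: "of_int (b c) \<le> Lf U a c v" using sv c unfolding solv_def by auto
      have b0: "(0::rat) \<le> of_int (b c)" using b01 c by simp
      have "(of_int (b c) :: rat) \<le> of_int \<bar>D\<bar> * of_int (b c)"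
        using D1 b0 by (simp add: mult_le_cancel_right1)
      also have "\<dots> \<le> of_int \<bar>D\<bar> * Lf U a c v" using bl D1 by (intro mult_left_mono) auto
      also have "\<dots> = of_int (Lf U a c w)" by (rule Lw[symmetric])
      finally have "b c \<le> Lf U a c w" by linarith
      then show ?thesis using False by simp
    qed
  qed
  have suppw: "{u\<in>U. w u \<noteq> 0} \<subseteq> S" unfolding w_def by auto
  have cardw: "card {u\<in>U. w u \<noteq> 0} \<le> n" unfolding n_card using fS suppw card_mono by blast
  define KK where "KK = card C * M^2"
  have MM: "int M \<le> int M * int M" using M1 by simp
  have bdG: "\<And>k. k < n \<Longrightarrow> \<forall>i<n. \<forall>j<n. \<bar>replace_col G h k $$ (i,j)\<bar> \<le> int KK"
  proof (intro allI impI)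
    fix k i j assume k: "k < n" and i: "i < n" and j: "j < n"
    have "\<bar>\<Sum>l<p. A l i * A l j\<bar> \<le> (\<Sum>l<p. \<bar>A l i * A l j\<bar>)" by (rule sum_abs)
    also have "\<dots> \<le> (\<Sum>l<p. int M * int M)"
      using Abd i j by (intro sum_mono) (auto simp: abs_mult intro!: mult_mono)
    also have "\<dots> = int p * (int M * int M)" by simp
    also have "\<dots> \<le> int KK" unfolding KK_def using pC by (simp add: power2_eq_square mult_right_mono)
    finally have g: "\<bar>\<Sum>l<p. A l i * A l j\<bar> \<le> int KK" .
    have "\<bar>\<Sum>l<p. A l i * b (cs ! l)\<bar> \<le> (\<Sum>l<p. \<bar>A l i * b (cs ! l)\<bar>)" by (rule sum_abs)
    also have "\<dots> \<le> (\<Sum>l<p. int M * int M)"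
    proof (rule sum_mono)
      fix l assume l: "l \<in> {..<p}"
      have "\<bar>b (cs ! l)\<bar> \<le> 1" using b01 csC l by auto
      moreover have "\<bar>A l i\<bar> \<le> int M" using Abd[of l i] l i by auto
      ultimately have "\<bar>A l i\<bar> * \<bar>b (cs ! l)\<bar> \<le> int M * 1"
        by (intro mult_mono) auto
      then have "\<bar>A l i * b (cs ! l)\<bar> \<le> int M * 1" by (simp add: abs_mult)
      then show "\<bar>A l i * b (cs ! l)\<bar> \<le> int M * int M" using MM by simp
    qed
    also have "\<dots> = int p * (int M * int M)" by simp
    also have "\<dots> \<le> int KK" unfolding KK_def using pC by (simp add: power2_eq_square mult_right_mono)
    finally have hh: "\<bar>\<Sum>l<p. A l i * b (cs ! l)\<bar> \<le> int KK" .
    show "\<bar>replace_col G h k $$ (i,j)\<bar> \<le> int KK"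
      using g hh i j Gc unfolding replace_col_def G_def h_def by auto
  qed
  have wb: "\<forall>u\<in>U. \<bar>w u\<bar> \<le> int (fact n * KK^n)"
  proof
    fix u assume u: "u \<in> U"
    show "\<bar>w u\<bar> \<le> int (fact n * KK^n)"
    proof (cases "u \<in> S")
      case True
      then have k: "idx u < n" using idx2 by blast
      have rcc: "replace_col G h (idx u) \<in> carrier_mat n n" using Gc unfolding replace_col_def by auto
      have "\<bar>w u\<bar> = \<bar>Dk (idx u)\<bar>" unfolding w_def using True D0 by (simp add: abs_mult abs_sgn_eq)
      also have "\<dots> \<le> int (fact n) * int KK ^ n"
        unfolding Dk_def by (rule det_bound_int[OF rcc bdG[OF k]])
      finally show ?thesis by simp
    next
      case False then show ?thesis unfolding w_def by simp
    qed
  qed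
  show ?thesis using sw cardw wb np pC unfolding KK_def by (intro exI[of _ w] conjI) (auto intro!: exI[of _ n])
qed



lemma solv_of_int:
  assumes "solv U C a e b (w :: 'u \<Rightarrow> int)"
  shows "solv U C a e b (\<lambda>u. of_int (w u) :: 'v::linordered_idom)"
proof -
  have L: "\<And>c. Lf U a c (\<lambda>u. of_int (w u) :: 'v) = of_int (Lf U a c w)" by (rule Lf_of_int[symmetric])
  show ?thesis using assms unfolding solv_def L
    by (auto split: if_splits)
qed

lemma lp_main:
  fixes v :: "'u \<Rightarrow> rat" and M :: nat
  assumes fU: "finite U" and fC: "finite C" and eb: "\<forall>c\<in>C. e c \<longrightarrow> b c = 0"
    and b01: "\<forall>c\<in>C. 0 \<le> b c \<and> b c \<le> 1"
    and aM: "\<forall>c\<in>C. \<forall>u\<in>U. \<bar>a c u\<bar> \<le> int M" and M1: "1 \<le> M"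
    and sv: "solv U C a e b v"
  shows "\<exists>w::'u\<Rightarrow>int. solv U C a e b w \<and> (\<exists>n \<le> card C. card {u\<in>U. w u \<noteq> 0} \<le> n \<and>
           (\<forall>u\<in>U. \<bar>w u\<bar> \<le> int (fact n * (card C * M^2)^n)))"
proof -
  obtain v' where "solv U C a e b v'" "rigid U C a b v'" using reduce[OF fU fC eb sv] by blast
  then show ?thesis using rigid_int[OF fU fC eb b01 aM M1] by blast
qed

lemma arith_bound:
  fixes n m M :: nat
  assumes "n \<le> m" "1 \<le> m" "1 \<le> M"
  shows "fact n * (m * M^2)^n \<le> m * (m * M) ^ (2 * m + 1)"
proof -
  have "fact n \<le> n ^ n" using fact_le_power[of n, where 'a=nat] by simp
  also have "\<dots> \<le> m ^ n" using assms by (simp add: power_mono)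
  finally have "fact n * (m * M^2)^n \<le> m ^ n * (m * M^2)^n" by (rule mult_right_mono) simp
  also have "\<dots> = ((m * M)^2)^n" by (simp add: power_mult_distrib power2_eq_square algebra_simps)
  also have "\<dots> \<le> ((m * M)^2)^m" using assms by (intro power_increasing) auto
  also have "\<dots> = (m * M)^(2*m)" by (simp add: power_mult)
  also have "\<dots> \<le> (m * M)^(2*m) * (m * (m * M))" using assms by simp
  also have "\<dots> = m * (m * M) ^ (2 * m + 1)" by (simp add: algebra_simps)
  finally show ?thesis .
qed

definition acoef :: "nat \<Rightarrow> (nat \<Rightarrow> ('a \<Rightarrow> nat) set) \<Rightarrow> nat \<Rightarrow> ('a \<Rightarrow> nat) \<Rightarrow> 'a constr \<Rightarrow> 'a unknown \<Rightarrow> int" where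
 "acoef M Theta i th c u = (case c of
    C0 j x \<Rightarrow> (if u = YU j x then 1 else 0) -
       (case u of XU j' t \<Rightarrow> if j' = j \<and> t \<in> Theta j then int (t x) else 0 | YU _ _ \<Rightarrow> 0)
  | C1 j x \<Rightarrow> (if royal M (Theta j) x then (if u = YU j x then 1 else 0)
              else (case u of XU j' t \<Rightarrow> if j' = j \<and> t \<in> {t \<in> Theta j. t x = M} then 1 else 0 | YU _ _ \<Rightarrow> 0))
  | C2 j l x \<Rightarrow> (if u = YU j x then 1 else 0) - (if u = YU l x then 1 else 0)
  | C3 \<Rightarrow> (if u = XU i th then 1 else 0))"

definition ecf :: "'a constr \<Rightarrow> bool" where
  "ecf c = (case c of C0 _ _ \<Rightarrow> True | _ \<Rightarrow> False)"

definition bcf :: "'a constr \<Rightarrow> int" where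
  "bcf c = (case c of C0 _ _ \<Rightarrow> 0 | C2 _ _ _ \<Rightarrow> 0 | _ \<Rightarrow> 1)"

lemma sum_XU:
  fixes f :: "('a \<Rightarrow> nat) \<Rightarrow> 'v::comm_monoid_add"
  assumes fU: "finite U" and sub: "XU j ` T \<subseteq> U"
  shows "(\<Sum>u\<in>U. (case u of XU j' t \<Rightarrow> if j' = j \<and> t \<in> T then f t else 0 | YU _ _ \<Rightarrow> 0)) = (\<Sum>t\<in>T. f t)"
proof -
  let ?g = "\<lambda>u. (case u of XU j' t \<Rightarrow> if j' = j \<and> t \<in> T then f t else 0 | YU _ _ \<Rightarrow> 0)"
  have "(\<Sum>u\<in>U. ?g u) = (\<Sum>u\<in>XU j ` T. ?g u)"
  proof (rule sum.mono_neutral_right[OF fU sub, symmetric, THEN sym])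
    show "\<forall>u\<in>U - XU j ` T. ?g u = 0"
    proof
      fix u assume "u \<in> U - XU j ` T"
      then show "?g u = 0" by (cases u) auto
    qed
  qed
  also have "\<dots> = (\<Sum>t\<in>T. ?g (XU j t))"
    by (subst sum.reindex) (auto simp: inj_on_def)
  also have "\<dots> = (\<Sum>t\<in>T. f t)" by (rule sum.cong) auto
  finally show ?thesis .
qed

lemma sum_delta_U:
  fixes f :: "'u \<Rightarrow> 'v::comm_monoid_add"
  assumes "finite U" "u0 \<in> U"
  shows "(\<Sum>u\<in>U. if u = u0 then f u else 0) = f u0"
  using assms by (simp add: sum.delta')

lemma Lf_C0:
  fixes v :: "'a unknown \<Rightarrow> 'v::linordered_idom"
  assumes fU: "finite U" and Y: "YU j x \<in> U" and X: "XU j ` Theta j \<subseteq> U"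
  shows "Lf U (acoef M Theta i th) (C0 j x) v = v (YU j x) - (\<Sum>t\<in>Theta j. of_nat (t x) * v (XU j t))"
proof -
  have e: "\<And>u. of_int (acoef M Theta i th (C0 j x) u) * v u =
     (if u = YU j x then v u else 0) -
     (case u of XU j' t \<Rightarrow> if j' = j \<and> t \<in> Theta j then of_nat (t x) * v (XU j t) else 0 | YU _ _ \<Rightarrow> 0)"
    by (case_tac u) (auto simp: acoef_def algebra_simps)
  show ?thesis unfolding Lf_def e sum_subtractf sum_delta_U[OF fU Y] sum_XU[OF fU X] ..
qed

lemma Lf_C1r:
  fixes v :: "'a unknown \<Rightarrow> 'v::linordered_idom"
  assumes fU: "finite U" and Y: "YU j x \<in> U" and r: "royal M (Theta j) x"
  shows "Lf U (acoef M Theta i th) (C1 j x) v = v (YU j x)"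
proof -
  have e: "\<And>u. of_int (acoef M Theta i th (C1 j x) u) * v u = (if u = YU j x then v u else 0)"
    using r by (auto simp: acoef_def)
  show ?thesis unfolding Lf_def e sum_delta_U[OF fU Y] ..
qed

lemma Lf_C1n:
  fixes v :: "'a unknown \<Rightarrow> 'v::linordered_idom"
  assumes fU: "finite U" and X: "XU j ` Theta j \<subseteq> U" and r: "\<not> royal M (Theta j) x"
  shows "Lf U (acoef M Theta i th) (C1 j x) v = (\<Sum>t\<in>{t \<in> Theta j. t x = M}. v (XU j t))"
proof -
  have e: "\<And>u. of_int (acoef M Theta i th (C1 j x) u) * v u =
     (case u of XU j' t \<Rightarrow> if j' = j \<and> t \<in> {t \<in> Theta j. t x = M} then v (XU j t) else 0 | YU _ _ \<Rightarrow> 0)"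
    using r by (case_tac u) (auto simp: acoef_def)
  have X': "XU j ` {t \<in> Theta j. t x = M} \<subseteq> U" using X by auto
  show ?thesis unfolding Lf_def e sum_XU[OF fU X'] ..
qed

lemma Lf_C2:
  fixes v :: "'a unknown \<Rightarrow> 'v::linordered_idom"
  assumes fU: "finite U" and Y: "YU j x \<in> U" "YU l x \<in> U" and jl: "j \<noteq> l"
  shows "Lf U (acoef M Theta i th) (C2 j l x) v = v (YU j x) - v (YU l x)"
proof -
  have e: "\<And>u. of_int (acoef M Theta i th (C2 j l x) u) * v u =
     (if u = YU j x then v u else 0) - (if u = YU l x then v u else 0)"
    using jl by (auto simp: acoef_def)
  show ?thesis unfolding Lf_def e sum_subtractf sum_delta_U[OF fU Y(1)] sum_delta_U[OF fU Y(2)] ..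
qed

lemma Lf_C3:
  fixes v :: "'a unknown \<Rightarrow> 'v::linordered_idom"
  assumes fU: "finite U" and X: "XU i th \<in> U"
  shows "Lf U (acoef M Theta i th) C3 v = v (XU i th)"
proof -
  have e: "\<And>u. of_int (acoef M Theta i th C3 u) * v u = (if u = XU i th then v u else 0)"
    by (auto simp: acoef_def)
  show ?thesis unfolding Lf_def e sum_delta_U[OF fU X] ..
qed



lemma finite_Theta:
  assumes "finite A" "\<forall>j\<in>{1..k}. \<forall>t\<in>Theta j. counting_type A M t" "j \<in> {1..k}"
  shows "finite (Theta j)"
proof -
  have "Theta j \<subseteq> {f. \<forall>x. (x \<in> A \<longrightarrow> f x \<in> {0..M}) \<and> (x \<notin> A \<longrightarrow> f x = 0)}"
    using assms(2,3) unfolding counting_type_def by auto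
  moreover have "finite {f. \<forall>x. (x \<in> A \<longrightarrow> f x \<in> {0..M}) \<and> (x \<notin> A \<longrightarrow> f x = (0::nat))}"
    using assms(1) by (intro finite_set_of_finite_funs) auto
  ultimately show ?thesis by (rule finite_subset)
qed

lemma types_sub: "types_of_tuple A k Theta \<subseteq> A"
  unfolding types_of_tuple_def by auto

lemma finite_unknowns:
  assumes "finite A" "\<forall>j\<in>{1..k}. \<forall>t\<in>Theta j. counting_type A M t"
  shows "finite (unknowns A k Theta)"
proof -
  have e1: "{XU j t | j t. j \<in> {1..k} \<and> t \<in> Theta j} = (\<Union>j\<in>{1..k}. XU j ` Theta j)" by auto
  have e2: "{YU j a | j a. j \<in> {1..k} \<and> a \<in> types_of_tuple A k Theta} \<subseteq> (\<lambda>(j,a). YU j a) ` ({1..k} \<times> A)"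
    using types_sub by fastforce
  have f1: "finite (\<Union>j\<in>{1..k}. XU j ` Theta j)" using finite_Theta[OF assms] by auto
  have f2: "finite ((\<lambda>(j,a). YU j a) ` ({1..k} \<times> A))" using assms(1) by auto
  have f3: "finite {YU j a | j a. j \<in> {1..k} \<and> a \<in> types_of_tuple A k Theta}"
    by (rule finite_subset[OF e2 f2])
  show ?thesis unfolding unknowns_def e1 by (rule finite_UnI[OF f1 f3])
qed

lemma finite_constrs:
  assumes "finite A"
  shows "finite (constrs A M k Theta)"
proof -
  have e1: "{C0 j a | j a. j \<in> {1..k} \<and> a \<in> types_of_tuple A k Theta} \<subseteq> (\<lambda>(j,a). C0 j a) ` ({1..k} \<times> A)"
  proof (rule subsetI)
    fix x assume "x \<in> {C0 j a | j a. j \<in> {1..k} \<and> a \<in> types_of_tuple A k Theta}"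
    then have "\<exists>j a. x = C0 j a \<and> j \<in> {1..k} \<and> a \<in> types_of_tuple A k Theta" by blast
    then obtain j a where h: "x = C0 j a" "j \<in> {1..k}" "a \<in> types_of_tuple A k Theta"
      by blast
    have mem: "(j,a) \<in> {1..k} \<times> A" using h(2) subsetD[OF types_sub h(3)] by simp
    show "x \<in> (\<lambda>(j,a). C0 j a) ` ({1..k} \<times> A)"
      by (rule image_eqI[OF _ mem]) (simp add: h(1))
  qed
  have e2: "{C1 j a | j a. j \<in> {1..k} \<and> a \<in> types_of_tuple A k Theta} \<subseteq> (\<lambda>(j,a). C1 j a) ` ({1..k} \<times> A)"
  proof (rule subsetI)
    fix x assume "x \<in> {C1 j a | j a. j \<in> {1..k} \<and> a \<in> types_of_tuple A k Theta}"
    then have "\<exists>j a. x = C1 j a \<and> j \<in> {1..k} \<and> a \<in> types_of_tuple A k Theta" by blast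
    then obtain j a where h: "x = C1 j a" "j \<in> {1..k}" "a \<in> types_of_tuple A k Theta"
      by blast
    have mem: "(j,a) \<in> {1..k} \<times> A" using h(2) subsetD[OF types_sub h(3)] by simp
    show "x \<in> (\<lambda>(j,a). C1 j a) ` ({1..k} \<times> A)"
      by (rule image_eqI[OF _ mem]) (simp add: h(1))
  qed
  have e3: "{C2 j l a | j l a. j \<in> {1..k} \<and> l \<in> {1..k} \<and> l \<noteq> j \<and>
                  a \<in> types_of_tuple A k Theta \<and> royal M (Theta j) a} \<subseteq> (\<lambda>(j,l,a). C2 j l a) ` ({1..k} \<times> {1..k} \<times> A)"
  proof (rule subsetI)
    fix x assume "x \<in> {C2 j l a | j l a. j \<in> {1..k} \<and> l \<in> {1..k} \<and> l \<noteq> j \<and>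
                  a \<in> types_of_tuple A k Theta \<and> royal M (Theta j) a}"
    then have "\<exists>j l a. x = C2 j l a \<and> j \<in> {1..k} \<and> l \<in> {1..k} \<and> a \<in> types_of_tuple A k Theta" by blast
    then obtain j l a where h: "x = C2 j l a" "j \<in> {1..k}" "l \<in> {1..k}" "a \<in> types_of_tuple A k Theta"
      by blast
    have mem: "(j,l,a) \<in> {1..k} \<times> {1..k} \<times> A" using h(2,3) subsetD[OF types_sub h(4)] by simp
    show "x \<in> (\<lambda>(j,l,a). C2 j l a) ` ({1..k} \<times> {1..k} \<times> A)"
      by (rule image_eqI[OF _ mem]) (simp add: h(1))
  qed
  have f1: "finite ((\<lambda>(j,a). C0 j a) ` ({1..k} \<times> A))" using assms by simp
  have f2: "finite ((\<lambda>(j,a). C1 j a) ` ({1..k} \<times> A))" using assms by simp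
  have f3: "finite ((\<lambda>(j,l,a). C2 j l a) ` ({1..k} \<times> {1..k} \<times> A))" using assms by simp
  show ?thesis unfolding constrs_def
    by (intro finite_UnI finite_subset[OF e1 f1] finite_subset[OF e2 f2] finite_subset[OF e3 f3]) simp
qed

lemma sat_iff:
  fixes v :: "'a unknown \<Rightarrow> 'v::linordered_idom"
  assumes fA: "finite A" and ct: "\<forall>j\<in>{1..k}. \<forall>t\<in>Theta j. counting_type A M t"
    and i: "i \<in> {1..k}" and th: "th \<in> Theta i"
    and c: "c \<in> constrs A M k Theta"
  shows "sat_constr M Theta i th v c \<longleftrightarrow>
    (if ecf c then Lf (unknowns A k Theta) (acoef M Theta i th) c v = 0
     else of_int (bcf c) \<le> Lf (unknowns A k Theta) (acoef M Theta i th) c v)"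
proof -
  let ?U = "unknowns A k Theta"
  have fU: "finite ?U" by (rule finite_unknowns[OF fA ct])
  have XU: "\<And>j. j \<in> {1..k} \<Longrightarrow> XU j ` Theta j \<subseteq> ?U" unfolding unknowns_def by auto
  have YU: "\<And>j a. j \<in> {1..k} \<Longrightarrow> a \<in> types_of_tuple A k Theta \<Longrightarrow> YU j a \<in> ?U"
    unfolding unknowns_def by auto
  show ?thesis
  proof (cases c)
    case (C0 j a)
    then have j: "j \<in> {1..k}" and a: "a \<in> types_of_tuple A k Theta" using c unfolding constrs_def by auto
    show ?thesis unfolding C0 using Lf_C0[where Theta=Theta and j=j and x=a and M=M and i=i and th=th and v=v, OF fU YU[OF j a] XU[OF j]]
      by (simp add: ecf_def)
  next
    case (C1 j a)
    then have j: "j \<in> {1..k}" and a: "a \<in> types_of_tuple A k Theta" using c unfolding constrs_def by auto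
    show ?thesis
    proof (cases "royal M (Theta j) a")
      case True
      have s: "sat_constr M Theta i th v (C1 j a) = (1 \<le> v (YU j a))" using True by simp
      have e: "ecf (C1 j a) = False" "bcf (C1 j a) = 1" by (simp_all add: ecf_def bcf_def)
      show ?thesis unfolding C1 s e if_False
        Lf_C1r[where Theta=Theta and j=j and x=a and M=M and i=i and th=th and v=v, OF fU YU[OF j a] True]
        by simp
    next
      case False
      have s: "sat_constr M Theta i th v (C1 j a) = (1 \<le> (\<Sum>t\<in>{t \<in> Theta j. t a = M}. v (XU j t)))"
        using False by simp
      have e: "ecf (C1 j a) = False" "bcf (C1 j a) = 1" by (simp_all add: ecf_def bcf_def)
      show ?thesis unfolding C1 s e if_False
        Lf_C1n[where Theta=Theta and j=j and x=a and M=M and i=i and th=th and v=v, OF fU XU[OF j] False]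
        by simp
    qed
  next
    case (C2 j l a)
    then have j: "j \<in> {1..k}" "l \<in> {1..k}" "l \<noteq> j" and a: "a \<in> types_of_tuple A k Theta"
      using c unfolding constrs_def by auto
    show ?thesis unfolding C2 using Lf_C2[OF fU YU[OF j(1) a] YU[OF j(2) a], of M Theta i th v] j(3)
      by (simp add: ecf_def bcf_def)
  next
    case C3
    have "XU i th \<in> ?U" using XU[OF i] th by auto
    then show ?thesis unfolding C3 using Lf_C3[OF fU, of i th M Theta v]
      by (simp add: ecf_def bcf_def)
  qed
qed

lemma nonneg_iff:
  fixes v :: "'a unknown \<Rightarrow> 'v::linordered_idom"
  assumes fA: "finite A" and ct: "\<forall>j\<in>{1..k}. \<forall>t\<in>Theta j. counting_type A M t"
    and i: "i \<in> {1..k}" and th: "th \<in> Theta i"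
  shows "nonneg_solution A M k Theta i th v \<longleftrightarrow>
     solv (unknowns A k Theta) (constrs A M k Theta) (acoef M Theta i th) ecf bcf v"
proof -
  have "(\<forall>c\<in>constrs A M k Theta. sat_constr M Theta i th v c) \<longleftrightarrow>
    (\<forall>c\<in>constrs A M k Theta. if ecf c then Lf (unknowns A k Theta) (acoef M Theta i th) c v = 0
     else of_int (bcf c) \<le> Lf (unknowns A k Theta) (acoef M Theta i th) c v)"
    by (rule ball_cong[OF refl]) (rule sat_iff[OF fA ct i th])
  then show ?thesis unfolding nonneg_solution_def solv_def by simp
qed

lemma acoef_bound:
  assumes ct: "\<forall>j\<in>{1..k}. \<forall>t\<in>Theta j. counting_type A M t" and M1: "1 \<le> M"
    and c: "c \<in> constrs A M k Theta"
  shows "\<bar>acoef M Theta i th c u\<bar> \<le> int M"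
proof -
  have tb: "\<And>j t x. j \<in> {1..k} \<Longrightarrow> t \<in> Theta j \<Longrightarrow> t x \<le> M"
    using ct unfolding counting_type_def by (metis le0)
  show ?thesis
  proof (cases c)
    case (C0 j a)
    then have j: "j \<in> {1..k}" using c unfolding constrs_def by auto
    show ?thesis using M1 tb[OF j] unfolding C0 acoef_def by (cases u) auto
  next
    case (C1 j a)
    then show ?thesis using M1 unfolding acoef_def by (cases u) auto
  next
    case (C2 j l a)
    then show ?thesis using M1 unfolding acoef_def by (cases u) auto
  next
    case C3
    then show ?thesis using M1 unfolding acoef_def by auto
  qed
qed

theorem lemma4:
  fixes A :: "'a set" and len M k i :: nat
    and Theta :: "nat \<Rightarrow> ('a \<Rightarrow> nat) set" and th :: "'a \<Rightarrow> nat"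
  assumes "finite A" and "A \<noteq> {}" and "len \<ge> 1"
    and "M = 3 * card A * len ^ 3"
    and "\<forall>j\<in>{1..k}. \<forall>t\<in>Theta j. counting_type A M t"
    and "i \<in> {1..k}" and "th \<in> Theta i"
  defines "m \<equiv> card (constrs A M k Theta)"
  shows "((\<exists>v :: 'a unknown \<Rightarrow> int. nonneg_solution A M k Theta i th v)
            \<longleftrightarrow> (\<exists>v :: 'a unknown \<Rightarrow> rat. nonneg_solution A M k Theta i th v))
       \<and> ((\<exists>v :: 'a unknown \<Rightarrow> int. nonneg_solution A M k Theta i th v)
            \<longleftrightarrow> (\<exists>v :: 'a unknown \<Rightarrow> int. nonneg_solution A M k Theta i th v
                   \<and> card {u \<in> unknowns A k Theta. v u \<noteq> 0} \<le> m
                   \<and> (\<forall>u\<in>unknowns A k Theta. v u \<le> int (m * (m * M) ^ (2 * m + 1)))))"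
proof -
  note fA = assms(1) and ct = assms(5) and i = assms(6) and th = assms(7)
  let ?U = "unknowns A k Theta" and ?C = "constrs A M k Theta" and ?a = "acoef M Theta i th"
  have cA: "card A \<ge> 1" using assms(1,2) by (simp add: Suc_le_eq card_gt_0_iff)
  have M1: "1 \<le> M" unfolding assms(4) using cA assms(3) by simp
  have fU: "finite ?U" by (rule finite_unknowns[OF fA ct])
  have fC: "finite ?C" by (rule finite_constrs[OF fA])
  have m1: "1 \<le> m" unfolding m_def using fC by (simp add: Suc_le_eq card_gt_0_iff constrs_def)
  have eb: "\<forall>c\<in>?C. ecf c \<longrightarrow> bcf c = 0" by (auto simp: ecf_def bcf_def split: constr.splits)
  have b01: "\<forall>c\<in>?C. 0 \<le> bcf c \<and> bcf c \<le> 1" by (auto simp: bcf_def split: constr.splits)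
  have aM: "\<forall>c\<in>?C. \<forall>u\<in>?U. \<bar>?a c u\<bar> \<le> int M" using acoef_bound[OF ct M1] by blast
  have NI: "\<And>v :: 'a unknown \<Rightarrow> int. nonneg_solution A M k Theta i th v \<longleftrightarrow> solv ?U ?C ?a ecf bcf v"
    by (rule nonneg_iff[OF fA ct i th])
  have NR: "\<And>v :: 'a unknown \<Rightarrow> rat. nonneg_solution A M k Theta i th v \<longleftrightarrow> solv ?U ?C ?a ecf bcf v"
    by (rule nonneg_iff[OF fA ct i th])
  have main: "\<And>v :: 'a unknown \<Rightarrow> rat. solv ?U ?C ?a ecf bcf v \<Longrightarrow>
      \<exists>w :: 'a unknown \<Rightarrow> int. nonneg_solution A M k Theta i th w
                   \<and> card {u \<in> ?U. w u \<noteq> 0} \<le> m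
                   \<and> (\<forall>u\<in>?U. w u \<le> int (m * (m * M) ^ (2 * m + 1)))"
  proof -
    fix v :: "'a unknown \<Rightarrow> rat" assume sv: "solv ?U ?C ?a ecf bcf v"
    obtain w :: "'a unknown \<Rightarrow> int" and n where sw: "solv ?U ?C ?a ecf bcf w" and n: "n \<le> m"
      and cw: "card {u\<in>?U. w u \<noteq> 0} \<le> n" and bw: "\<forall>u\<in>?U. \<bar>w u\<bar> \<le> int (fact n * (m * M^2)^n)"
      using lp_main[OF fU fC eb b01 aM M1 sv] unfolding m_def by blast
    have ab: "fact n * (m * M^2)^n \<le> m * (m * M) ^ (2 * m + 1)" by (rule arith_bound[OF n m1 M1])
    have "\<forall>u\<in>?U. w u \<le> int (m * (m * M) ^ (2 * m + 1))"
    proof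
      fix u assume "u \<in> ?U"
      then have "\<bar>w u\<bar> \<le> int (fact n * (m * M^2)^n)" using bw by blast
      also have "\<dots> \<le> int (m * (m * M) ^ (2 * m + 1))" using ab by (simp only: of_nat_le_iff)
      finally show "w u \<le> int (m * (m * M) ^ (2 * m + 1))" by simp
    qed
    then show "\<exists>w :: 'a unknown \<Rightarrow> int. nonneg_solution A M k Theta i th w
                   \<and> card {u \<in> ?U. w u \<noteq> 0} \<le> m
                   \<and> (\<forall>u\<in>?U. w u \<le> int (m * (m * M) ^ (2 * m + 1)))"
      using sw cw n NI by (intro exI[of _ w]) auto
  qed
  have i2r: "\<And>w :: 'a unknown \<Rightarrow> int. nonneg_solution A M k Theta i th w \<Longrightarrow>
      \<exists>v :: 'a unknown \<Rightarrow> rat. nonneg_solution A M k Theta i th v"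
  proof -
    fix w :: "'a unknown \<Rightarrow> int" assume "nonneg_solution A M k Theta i th w"
    then have "solv ?U ?C ?a ecf bcf w" using NI by blast
    then have "solv ?U ?C ?a ecf bcf (\<lambda>u. of_int (w u) :: rat)" by (rule solv_of_int)
    then show "\<exists>v :: 'a unknown \<Rightarrow> rat. nonneg_solution A M k Theta i th v" using NR by blast
  qed
  show ?thesis
  proof (intro conjI iffI)
    assume "\<exists>v :: 'a unknown \<Rightarrow> int. nonneg_solution A M k Theta i th v"
    then show "\<exists>v :: 'a unknown \<Rightarrow> rat. nonneg_solution A M k Theta i th v" using i2r by blast
  next
    assume "\<exists>v :: 'a unknown \<Rightarrow> rat. nonneg_solution A M k Theta i th v"
    then show "\<exists>v :: 'a unknown \<Rightarrow> int. nonneg_solution A M k Theta i th v" using main NR by blast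
  next
    assume "\<exists>v :: 'a unknown \<Rightarrow> int. nonneg_solution A M k Theta i th v"
    then obtain v :: "'a unknown \<Rightarrow> rat" where "nonneg_solution A M k Theta i th v" using i2r by blast
    then show "\<exists>v :: 'a unknown \<Rightarrow> int. nonneg_solution A M k Theta i th v
                   \<and> card {u \<in> ?U. v u \<noteq> 0} \<le> m
                   \<and> (\<forall>u\<in>?U. v u \<le> int (m * (m * M) ^ (2 * m + 1)))" using main NR by blast
  next
    assume "\<exists>v :: 'a unknown \<Rightarrow> int. nonneg_solution A M k Theta i th v
                   \<and> card {u \<in> ?U. v u \<noteq> 0} \<le> m
                   \<and> (\<forall>u\<in>?U. v u \<le> int (m * (m * M) ^ (2 * m + 1)))"
    then show "\<exists>v :: 'a unknown \<Rightarrow> int. nonneg_solution A M k Theta i th v" by blast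
  qed
qed


end
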